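(* Fix $d\ge1$, $N\ge1$, $\alpha\ge2$, powers $P_s,P_r>0$, gains $\xi_{u,v}>0$, and positions $\mathbf{s},\mathbf{1},\dots,\mathbf{N}\in\mathbb{R}^d$ with $\mathbf{s}\neq\mathbf{j}$ for all $j$. For a relay position $\mathbf{r}\in\mathbb{R}^d$ let $\mathsf{SNR}_{u,v}=\xi_{u,v}P_u/\|\mathbf{u}-\mathbf{v}\|^{\alpha}$ for $(u,v)\in\{(s,r),(s,j),(r,j)\}$ (an SNR being $+\infty$ when the distance is $0$). With $\mathsf{C}(x)=\tfrac12\log(1+x)$, $f_j(\rho,\mathbf{r})=\mathsf{SNR}_{s,j}+\mathsf{SNR}_{r,j}+2\rho\sqrt{\mathsf{SNR}_{s,j}\mathsf{SNR}_{r,j}}$, $g_j(\rho,\mathbf{r})=(1-\rho^2)(\mathsf{SNR}_{s,j}+\mathsf{SNR}_{s,r})$ and $$R_{CS}(\rho,\mathbf{r})=\min_{1\le j\le N}\min\big(\mathsf{C}(f_j(\rho,\mathbf{r})),\mathsf{C}(g_j(\rho,\mathbf{r}))\big),$$ $R_{CS}(\rho,\mathbf{r})$ is quasi-concave in $\mathbf{r}\in\mathbb{R}^d$ for every fixed $\rho\in[0,1]$.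
   Context: Setting: real AWGN multicast relay channel (cut-set bound) with source $s$, relay at position $\mathbf{r}$, destinations $1,\dots,N$, path-loss exponent $\alpha$ and channel gains $a_{u,v}=\sqrt{\xi_{u,v}}/\|\mathbf{u}-\mathbf{v}\|^{\alpha/2}$; $\rho$ is the source–relay input correlation coefficient. A function $F$ (possibly taking value $+\infty$) on a convex set is quasi-concave if $F(\lambda x_1+(1-\lambda)x_2)\ge\min(F(x_1),F(x_2))$ for all $x_1,x_2$ and $\lambda\in[0,1]$. *)

theory Defs
  imports "HOL-Analysis.Analysis" "HOL-Library.Extended_Real"
begin

definition quasiconcave_on :: "'a::real_vector set \<Rightarrow> ('a \<Rightarrow> ereal) \<Rightarrow> bool" where
  "quasiconcave_on S F \<longleftrightarrow> convex S \<and>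
     (\<forall>x1\<in>S. \<forall>x2\<in>S. \<forall>l::real. 0 \<le> l \<and> l \<le> 1 \<longrightarrow>
        F (l *\<^sub>R x1 + (1 - l) *\<^sub>R x2) \<ge> min (F x1) (F x2))"

definition SNR :: "real \<Rightarrow> real \<Rightarrow> real \<Rightarrow> 'a::real_normed_vector \<Rightarrow> 'a \<Rightarrow> ereal" where
  "SNR alpha xi P u v =
     (if norm (u - v) = 0 then \<infinity> else ereal (xi * P / norm (u - v) powr alpha))"

definition esqrt :: "ereal \<Rightarrow> ereal" where
  "esqrt x = (if x = \<infinity> then \<infinity> else ereal (sqrt (real_of_ereal x)))"

definition Cap :: "ereal \<Rightarrow> ereal" where
  "Cap x = (if x = \<infinity> then \<infinity> else ereal (ln (1 + real_of_ereal x) / 2))"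

definition f_fun :: "real \<Rightarrow> ereal \<Rightarrow> ereal \<Rightarrow> ereal" where
  "f_fun rho snr_sj snr_rj = snr_sj + snr_rj + ereal (2 * rho) * esqrt (snr_sj * snr_rj)"

definition g_fun :: "real \<Rightarrow> ereal \<Rightarrow> ereal \<Rightarrow> ereal" where
  "g_fun rho snr_sj snr_sr = ereal (1 - rho\<^sup>2) * (snr_sj + snr_sr)"

definition R_CS ::
  "nat \<Rightarrow> real \<Rightarrow> real \<Rightarrow> real \<Rightarrow> real \<Rightarrow> (nat \<Rightarrow> real) \<Rightarrow> (nat \<Rightarrow> real)
   \<Rightarrow> 'a::real_normed_vector \<Rightarrow> (nat \<Rightarrow> 'a) \<Rightarrow> real \<Rightarrow> 'a \<Rightarrow> ereal" where
  "R_CS N alpha Ps Pr xi_sr xi_sd xi_rd s dst rho r =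
     Min ((\<lambda>j. min (Cap (f_fun rho (SNR alpha (xi_sd j) Ps s (dst j))
                                     (SNR alpha (xi_rd j) Pr r (dst j))))
                    (Cap (g_fun rho (SNR alpha (xi_sd j) Ps s (dst j))
                                     (SNR alpha xi_sr Ps s r)))) ` {1..N})"

end

theory Submission imports Defs begin

lemma esqrt_ereal[simp]: "esqrt (ereal t) = ereal (sqrt t)" by (simp add: esqrt_def)

lemma Cap_mono: assumes "0 \<le> x" "x \<le> y" shows "Cap x \<le> Cap y"
proof (cases y)
  case (real b)
  then obtain a where "x = ereal a" using assms by (cases x) auto
  then show ?thesis using assms real by (simp add: Cap_def divide_right_mono)
qed (use assms in \<open>auto simp: Cap_def\<close>)

lemma f_nonneg: assumes "0 \<le> a" "0 \<le> rho" "0 \<le> x" shows "0 \<le> f_fun rho (ereal a) x"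
proof (cases x)
  case (real b) then show ?thesis using assms by (simp add: f_fun_def)
next
  case PInf then show ?thesis using assms by (auto simp: f_fun_def esqrt_def)
qed (use assms in auto)

lemma f_mono: assumes "0 \<le> a" "0 \<le> rho" "0 \<le> x" "x \<le> y"
  shows "f_fun rho (ereal a) x \<le> f_fun rho (ereal a) y"
proof (cases y)
  case (real b)
  then obtain c where c: "x = ereal c" using assms by (cases x) auto
  have "sqrt (a*c) \<le> sqrt (a*b)" using assms real c by (simp add: mult_left_mono)
  then have "rho * sqrt (a*c) \<le> rho * sqrt (a*b)" using assms by (simp add: mult_left_mono)
  then show ?thesis using assms real c by (simp add: f_fun_def)
next
  case PInf
  have "esqrt (ereal a * \<infinity>) \<noteq> -\<infinity>" by (simp add: esqrt_def)
  moreover have "esqrt (ereal a * \<infinity>) \<ge> 0" using assms by (auto simp: esqrt_def)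
  ultimately have "ereal (2*rho) * esqrt (ereal a * \<infinity>) \<noteq> -\<infinity>" using assms
    using ereal_mult_left_mono[of 0 "esqrt (ereal a * \<infinity>)" "ereal (2*rho)"] by auto
  then show ?thesis using PInf by (simp add: f_fun_def)
qed (use assms in auto)

lemma g_nonneg: assumes "0 \<le> a" "0 \<le> rho" "rho \<le> 1" "0 \<le> x" shows "0 \<le> g_fun rho (ereal a) x"
proof -
  have "0 \<le> 1 - rho\<^sup>2" using assms by (simp add: power_le_one abs_le_square_iff)
  then show ?thesis using assms unfolding g_fun_def
    using ereal_mult_left_mono[of 0 "ereal a + x" "ereal (1 - rho\<^sup>2)"] by simp
qed

lemma g_mono: assumes "0 \<le> a" "0 \<le> rho" "rho \<le> 1" "0 \<le> x" "x \<le> y"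
  shows "g_fun rho (ereal a) x \<le> g_fun rho (ereal a) y"
proof -
  have "0 \<le> 1 - rho\<^sup>2" using assms by (simp add: power_le_one abs_le_square_iff)
  then show ?thesis using assms unfolding g_fun_def
    by (intro ereal_mult_left_mono add_left_mono) auto
qed

lemma SNR_nonneg: assumes "0 \<le> xi * P" shows "0 \<le> SNR alpha xi P u v"
  using assms by (simp add: SNR_def)

lemma SNR_sym: "SNR alpha xi P u v = SNR alpha xi P v u"
  by (simp add: SNR_def norm_minus_commute)

lemma SNR_anti:
  assumes "0 \<le> xi * P" "0 < alpha" "norm (u1 - v1) \<le> norm (u2 - v2)"
  shows "SNR alpha xi P u2 v2 \<le> SNR alpha xi P u1 v1"
proof (cases "norm (u1 - v1) = 0")
  case True then show ?thesis by (simp add: SNR_def)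
next
  case False
  then have p1: "0 < norm (u1 - v1)" by simp
  then have p2: "norm (u2 - v2) \<noteq> 0" using assms by linarith
  have "norm (u1 - v1) powr alpha \<le> norm (u2 - v2) powr alpha"
    using assms p1 by (intro powr_mono2) auto
  moreover have "0 < norm (u1 - v1) powr alpha" using p1 by simp
  moreover have "0 < norm (u2 - v2) powr alpha" using p2 by simp
  ultimately have "xi * P / norm (u2 - v2) powr alpha \<le> xi * P / norm (u1 - v1) powr alpha"
    using assms by (intro divide_left_mono) (auto intro: mult_pos_pos)
  then show ?thesis using False p2 by (simp add: SNR_def)
qed

lemma qc_term:
  fixes x1 x2 p :: "'a::real_normed_vector" and H :: "ereal \<Rightarrow> ereal"
  assumes H: "\<And>x y. 0 \<le> x \<Longrightarrow> x \<le> y \<Longrightarrow> H x \<le> H y"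
    and "0 \<le> xi * P" "0 < alpha" "0 \<le> l" "l \<le> 1"
  shows "min (H (SNR alpha xi P x1 p)) (H (SNR alpha xi P x2 p))
           \<le> H (SNR alpha xi P (l *\<^sub>R x1 + (1 - l) *\<^sub>R x2) p)"
proof -
  have eq: "l *\<^sub>R x1 + (1 - l) *\<^sub>R x2 - p = l *\<^sub>R (x1 - p) + (1 - l) *\<^sub>R (x2 - p)"
    by (simp add: algebra_simps)
  have "norm (l *\<^sub>R x1 + (1 - l) *\<^sub>R x2 - p) \<le> l * norm (x1 - p) + (1 - l) * norm (x2 - p)"
    unfolding eq using assms
    by (metis (no_types, lifting) abs_of_nonneg diff_ge_0_iff_ge norm_scaleR norm_triangle_ineq)
  also have "\<dots> \<le> max (norm (x1 - p)) (norm (x2 - p))"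
    using assms by (intro convex_bound_le) auto
  finally have n: "norm (l *\<^sub>R x1 + (1 - l) *\<^sub>R x2 - p) \<le> max (norm (x1 - p)) (norm (x2 - p))" .
  show ?thesis
  proof (cases "norm (x2 - p) \<le> norm (x1 - p)")
    case True
    then have "SNR alpha xi P x1 p \<le> SNR alpha xi P (l *\<^sub>R x1 + (1 - l) *\<^sub>R x2) p"
      using n assms by (intro SNR_anti) auto
    then have "H (SNR alpha xi P x1 p) \<le> H (SNR alpha xi P (l *\<^sub>R x1 + (1 - l) *\<^sub>R x2) p)"
      using assms SNR_nonneg by (intro H) auto
    then show ?thesis by (simp add: min.coboundedI1)
  next
    case False
    then have "SNR alpha xi P x2 p \<le> SNR alpha xi P (l *\<^sub>R x1 + (1 - l) *\<^sub>R x2) p"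
      using n assms by (intro SNR_anti) auto
    then have "H (SNR alpha xi P x2 p) \<le> H (SNR alpha xi P (l *\<^sub>R x1 + (1 - l) *\<^sub>R x2) p)"
      using assms SNR_nonneg by (intro H) auto
    then show ?thesis by (simp add: min.coboundedI2)
  qed
qed

lemma min4: "min a1 a2 \<le> am \<Longrightarrow> min b1 b2 \<le> bm \<Longrightarrow> min (min a1 b1) (min a2 b2) \<le> min am (bm::'a::linorder)"
proof -
  assume h: "min a1 a2 \<le> am" "min b1 b2 \<le> bm"
  have "min (min a1 b1) (min a2 b2) = min (min a1 a2) (min b1 b2)"
    by (simp add: min.assoc min.commute min.left_commute)
  also have "\<dots> \<le> min am bm" using h by (rule min.mono)
  finally show ?thesis .
qed

theorem theorem4:
  fixes N :: nat and alpha Ps Pr xi_sr :: real and xi_sd xi_rd :: "nat \<Rightarrow> real"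
    and s :: "real ^ 'd" and dst :: "nat \<Rightarrow> real ^ 'd" and rho :: real
  assumes "N \<ge> 1" and "alpha \<ge> 2" and "Ps > 0" and "Pr > 0" and "xi_sr > 0"
    and "\<And>j. j \<in> {1..N} \<Longrightarrow> xi_sd j > 0"
    and "\<And>j. j \<in> {1..N} \<Longrightarrow> xi_rd j > 0"
    and "\<And>j. j \<in> {1..N} \<Longrightarrow> s \<noteq> dst j"
    and "0 \<le> rho" and "rho \<le> 1"
  shows "quasiconcave_on UNIV (\<lambda>r. R_CS N alpha Ps Pr xi_sr xi_sd xi_rd s dst rho r)"
proof -
  define T where "T = (\<lambda>j r. min (Cap (f_fun rho (SNR alpha (xi_sd j) Ps s (dst j))
                                     (SNR alpha (xi_rd j) Pr r (dst j))))
                    (Cap (g_fun rho (SNR alpha (xi_sd j) Ps s (dst j))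
                                     (SNR alpha xi_sr Ps s (r::real^'d)))))"
  have R: "R_CS N alpha Ps Pr xi_sr xi_sd xi_rd s dst rho r = Min ((\<lambda>j. T j r) ` {1..N})" for r
    by (simp add: R_CS_def T_def)
  have ne: "{1..N} \<noteq> {}" using assms by auto
  have Tq: "min (T j x1) (T j x2) \<le> T j (l *\<^sub>R x1 + (1 - l) *\<^sub>R x2)"
    if j: "j \<in> {1..N}" and l: "0 \<le> l" "l \<le> 1" for j x1 x2 l
  proof -
    define a where "a = xi_sd j * Ps / norm (s - dst j) powr alpha"
    have a0: "0 \<le> a" using assms(3) assms(6)[OF j] by (simp add: a_def)
    have aeq: "SNR alpha (xi_sd j) Ps s (dst j) = ereal a"
      using assms(8)[OF j] by (simp add: SNR_def a_def)
    have al: "0 < alpha" using assms by simp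
    have A: "min (Cap (f_fun rho (ereal a) (SNR alpha (xi_rd j) Pr x1 (dst j))))
                 (Cap (f_fun rho (ereal a) (SNR alpha (xi_rd j) Pr x2 (dst j))))
          \<le> Cap (f_fun rho (ereal a) (SNR alpha (xi_rd j) Pr (l *\<^sub>R x1 + (1 - l) *\<^sub>R x2) (dst j)))"
      apply (rule qc_term[where H = "\<lambda>x. Cap (f_fun rho (ereal a) x)"])
      using assms(4) assms(7)[OF j] al l a0 assms(9)
      by (auto intro!: Cap_mono f_mono f_nonneg)
    have B: "min (Cap (g_fun rho (ereal a) (SNR alpha xi_sr Ps x1 s)))
                 (Cap (g_fun rho (ereal a) (SNR alpha xi_sr Ps x2 s)))
          \<le> Cap (g_fun rho (ereal a) (SNR alpha xi_sr Ps (l *\<^sub>R x1 + (1 - l) *\<^sub>R x2) s))"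
      apply (rule qc_term[where H = "\<lambda>x. Cap (g_fun rho (ereal a) x)"])
      using assms(3,5) al l a0 assms(9,10)
      by (auto intro!: Cap_mono g_mono g_nonneg)
    have e: "\<And>x. SNR alpha xi_sr Ps s x = SNR alpha xi_sr Ps x s" by (rule SNR_sym)
    show ?thesis using min4[OF A B] unfolding T_def aeq e .
  qed
  show ?thesis unfolding quasiconcave_on_def
  proof (intro conjI ballI allI impI)
    fix x1 x2 :: "real^'d" and l :: real
    assume l: "0 \<le> l \<and> l \<le> 1"
    show "min (R_CS N alpha Ps Pr xi_sr xi_sd xi_rd s dst rho x1) (R_CS N alpha Ps Pr xi_sr xi_sd xi_rd s dst rho x2)
          \<le> R_CS N alpha Ps Pr xi_sr xi_sd xi_rd s dst rho (l *\<^sub>R x1 + (1 - l) *\<^sub>R x2)"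
      unfolding R
    proof (rule Min.boundedI)
      show "finite ((\<lambda>j. T j (l *\<^sub>R x1 + (1 - l) *\<^sub>R x2)) ` {1..N})" by simp
      show "(\<lambda>j. T j (l *\<^sub>R x1 + (1 - l) *\<^sub>R x2)) ` {1..N} \<noteq> {}" using ne by simp
      fix y assume "y \<in> (\<lambda>j. T j (l *\<^sub>R x1 + (1 - l) *\<^sub>R x2)) ` {1..N}"
      then obtain j where j: "j \<in> {1..N}" and y: "y = T j (l *\<^sub>R x1 + (1 - l) *\<^sub>R x2)" by auto
      have "Min ((\<lambda>j. T j x1) ` {1..N}) \<le> T j x1" using j by (intro Min_le) auto
      moreover have "Min ((\<lambda>j. T j x2) ` {1..N}) \<le> T j x2" using j by (intro Min_le) auto
      ultimately have "min (Min ((\<lambda>j. T j x1) ` {1..N})) (Min ((\<lambda>j. T j x2) ` {1..N})) \<le> min (T j x1) (T j x2)"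
        by (rule min.mono)
      also have "\<dots> \<le> y" using Tq[OF j] l y by auto
      finally show "min (Min ((\<lambda>j. T j x1) ` {1..N})) (Min ((\<lambda>j. T j x2) ` {1..N})) \<le> y" .
    qed
  qed simp
qed

end
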